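(* (a) Let $1<p<2$. For all $x\in\mathbb{R}^n\setminus\{0\}$ and $y\in\mathbb{R}^n$, $$|x+y|^{p-2}(x+y)\cdot y\ge |x|^{p-2}x\cdot y+\omega_1|y|^2+(p-2)\omega_2(|x|-|x+y|)^2,$$ with $\omega_1=|x+y|^{p-2}$, $\omega_2=\frac{|x+y|^{p-1}}{(2-p)|x+y|+(p-1)|x|}$ if $|x|\le|x+y|$, and $\omega_1=\omega_2=|x|^{p-2}$ if $|x+y|\le|x|$. Moreover $\omega_1|y|^2+(p-2)\omega_2(|x|-|x+y|)^2\ge 0$, with equality only when $y=0$. (b) Let $p\ge2$. There exists $c_3=c_3(p)\in(0,\tfrac12]$ such that for all $x\in\mathbb{R}^n\setminus\{0\}$, $y\in\mathbb{R}^n$, $$|x+y|^{p-2}(x+y)\cdot y\ge |x|^{p-2}x\cdot y+\omega_3|y|^2+(p-2)\omega_4(|x|-|x+y|)^2,$$ where $\omega_3=\omega_4=|x|^{p-2}$ if $|x|\le|x+y|$; $\omega_3=\omega_4=\frac{|x+y|^{p-1}}{|x|}$ if $c_3^{\frac1{p-1}}|x|\le|x+y|\le|x|$; and $\omega_3=c_3|x|^{p-2}$, $\omega_4=\frac{|x+y|^{p-1}}{|x|}$ if $|x+y|\le c_3^{\frac1{p-1}}|x|$.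
   Context: Here $x\cdot y$ is the Euclidean inner product on $\mathbb{R}^n$ and $|\cdot|$ the Euclidean norm. *)

theory Defs
  imports "HOL-Analysis.Analysis"
begin

text \<open>Weights, written in terms of r = |x| and s = |x+y|.  The case distinctions in the
paper overlap only on boundaries where the formulas agree, so if-then-else is faithful.\<close>

definition omega1 :: "real \<Rightarrow> real \<Rightarrow> real \<Rightarrow> real" where
  "omega1 p r s = (if r \<le> s then s powr (p - 2) else r powr (p - 2))"

definition omega2 :: "real \<Rightarrow> real \<Rightarrow> real \<Rightarrow> real" where
  "omega2 p r s = (if r \<le> s then s powr (p - 1) / ((2 - p) * s + (p - 1) * r)
                   else r powr (p - 2))"

definition omega3 :: "real \<Rightarrow> real \<Rightarrow> real \<Rightarrow> real \<Rightarrow> real" where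
  "omega3 p c r s = (if r \<le> s then r powr (p - 2)
                     else if c powr (1 / (p - 1)) * r \<le> s then s powr (p - 1) / r
                     else c * r powr (p - 2))"

definition omega4 :: "real \<Rightarrow> real \<Rightarrow> real \<Rightarrow> real \<Rightarrow> real" where
  "omega4 p c r s = (if r \<le> s then r powr (p - 2) else s powr (p - 1) / r)"

text \<open>Explicit coordinates for R^n (vectors indexed by i < n), used in part (b) so that the
constant c3 can be chosen independently of the dimension n.\<close>

definition dotn :: "nat \<Rightarrow> (nat \<Rightarrow> real) \<Rightarrow> (nat \<Rightarrow> real) \<Rightarrow> real" where
  "dotn n x y = (\<Sum>i<n. x i * y i)"

definition normn :: "nat \<Rightarrow> (nat \<Rightarrow> real) \<Rightarrow> real" where
  "normn n x = sqrt (dotn n x x)"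

end

theory Submission
  imports Defs
begin

lemma bern:
  fixes q r s :: real
  assumes "0 \<le> q" "q \<le> 1" "0 < r" "0 < s"
  shows "s powr q \<le> r powr (q - 1) * (q * s + (1 - q) * r)"
proof -
  have y: "s powr q * r powr (1 - q) \<le> q * s + (1 - q) * r"
    using Youngs_inequality_0[of q "1-q" s r] assms by simp
  have "s powr q = s powr q * (r powr (1 - q) * r powr (q - 1))"
    using assms by (simp flip: powr_add)
  also have "\<dots> = (s powr q * r powr (1 - q)) * r powr (q - 1)" by simp
  also have "\<dots> \<le> (q * s + (1 - q) * r) * r powr (q - 1)"
    using y by (intro mult_right_mono) auto
  finally show ?thesis by (simp add: mult.commute)
qed

lemma L1:
  fixes e al be :: real
  assumes "0 < al" "al \<le> be" "0 \<le> e"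
  shows "al powr e * (1 + e * (be - al) / be) \<le> be powr e"
proof -
  have "ln (al / be) \<le> al / be - 1" using assms by (intro ln_le_minus_one) auto
  hence l: "ln (be / al) \<ge> (be - al) / be" using assms by (simp add: ln_div field_simps)
  have "1 + e * (be - al) / be \<le> 1 + e * ln (be / al)"
    using mult_left_mono[OF l assms(3)] by simp
  also have "\<dots> \<le> exp (e * ln (be / al))" by simp
  also have "\<dots> = (be / al) powr e" using assms by (simp add: powr_def)
  also have "\<dots> = be powr e / al powr e" using assms by (simp add: powr_divide)
  finally have "1 + e * (be - al) / be \<le> be powr e / al powr e" .
  thus ?thesis using assms by (simp add: field_simps)
qed

lemma lin:
  fixes A B u m :: real
  assumes "\<bar>u\<bar> \<le> m" "A + B * m \<ge> 0" "A - B * m \<ge> 0"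
  shows "A + B * u \<ge> 0"
proof (cases "B \<ge> 0")
  case True
  have "B * (- m) \<le> B * u" using assms(1) True by (intro mult_left_mono) auto
  thus ?thesis using assms by simp
next
  case False
  have "B * m \<le> B * u" using assms(1) False by (intro mult_left_mono_neg) auto
  thus ?thesis using assms by simp
qed

lemma coreA_le:
  fixes p r s u a b :: real
  assumes p: "1 < p" "p < 2" and r: "0 < r" "r \<le> s" and u: "u \<le> r * s"
    and a: "0 < a" "a \<le> b" and bern: "r * b \<le> a * ((p - 1) * r + (2 - p) * s)"
  defines "D \<equiv> (2 - p) * s + (p - 1) * r"
  shows "a * (s\<^sup>2 - u) \<ge> b * (u - r\<^sup>2) + a * (s\<^sup>2 - 2 * u + r\<^sup>2)
            + (p - 2) * (s * a / D) * (r - s)\<^sup>2"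
proof -
  have D: "D > 0" unfolding D_def using p r by (smt (verit) mult_pos_pos mult_nonneg_nonneg)
  have "(p - 1) * r \<le> (p - 1) * s" using p r by (intro mult_left_mono) auto
  hence sD: "D \<le> s" unfolding D_def by (simp add: algebra_simps)
  have h1: "(b - a) * (r\<^sup>2 - r * s) \<le> (b - a) * (r\<^sup>2 - u)"
    using a u by (intro mult_left_mono) auto
  have h3: "r * b - r * a \<le> a * (2 - p) * (s - r)"
    using bern by (simp add: algebra_simps)
  have h3': "(s - r) * (r * b - r * a) \<le> (s - r) * (a * (2 - p) * (s - r))"
    using h3 r by (intro mult_left_mono) auto
  have "a \<le> s * a / D" using D sD a by (simp add: field_simps mult_right_mono)
  hence h4: "(2 - p) * a * (s - r)\<^sup>2 \<le> (2 - p) * (s * a / D) * (s - r)\<^sup>2"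
    using p by (intro mult_right_mono mult_left_mono) auto
  have eq0: "\<And>w. a * (s\<^sup>2 - u) - (b * (u - r\<^sup>2) + a * (s\<^sup>2 - 2 * u + r\<^sup>2)
            + (p - 2) * w * (r - s)\<^sup>2)
          = (b - a) * (r\<^sup>2 - u) + (2 - p) * w * (s - r)\<^sup>2"
    by (simp add: algebra_simps power2_eq_square)
  note eq = eq0[of "s * a / D"]
  have eq2: "(b - a) * (r\<^sup>2 - r * s) = - ((s - r) * (r * b - r * a))"
    by (simp add: algebra_simps power2_eq_square)
  have eq3: "(s - r) * (a * (2 - p) * (s - r)) = (2 - p) * a * (s - r)\<^sup>2"
    by (simp add: algebra_simps power2_eq_square)
  show ?thesis using eq eq2 eq3 h1 h3' h4 by linarith
qed

lemma coreA_le_nonneg: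
  fixes p r s u a :: real
  assumes p: "1 < p" "p < 2" and r: "0 < r" "r \<le> s" and u: "u \<le> r * s"
    and a: "0 < a"
  defines "D \<equiv> (2 - p) * s + (p - 1) * r"
  shows "a * (s\<^sup>2 - 2 * u + r\<^sup>2) + (p - 2) * (s * a / D) * (r - s)\<^sup>2 \<ge> 0
     \<and> (a * (s\<^sup>2 - 2 * u + r\<^sup>2) + (p - 2) * (s * a / D) * (r - s)\<^sup>2 = 0 \<longrightarrow> s\<^sup>2 - 2 * u + r\<^sup>2 = 0)"
proof -
  have D: "D > 0" unfolding D_def using p r by (smt (verit) mult_pos_pos mult_nonneg_nonneg)
  have Y: "s\<^sup>2 - 2 * u + r\<^sup>2 - (r - s)\<^sup>2 \<ge> 0" using u by (simp add: power2_eq_square algebra_simps)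
  have eq: "a * (s\<^sup>2 - 2 * u + r\<^sup>2) + (p - 2) * (s * a / D) * (r - s)\<^sup>2
      = a * (s\<^sup>2 - 2 * u + r\<^sup>2 - (r - s)\<^sup>2) + a * (r - s)\<^sup>2 * (p - 1) * r / D"
    using D unfolding D_def by (simp add: field_simps power2_eq_square)
  have t1: "a * (s\<^sup>2 - 2 * u + r\<^sup>2 - (r - s)\<^sup>2) \<ge> 0" using a Y by simp
  have t2: "a * (r - s)\<^sup>2 * (p - 1) * r / D \<ge> 0" using a p r D by simp
  have z: "s\<^sup>2 - 2 * u + r\<^sup>2 = 0" if "a * (s\<^sup>2 - 2 * u + r\<^sup>2 - (r - s)\<^sup>2) = 0" "a * (r - s)\<^sup>2 * (p - 1) * r / D = 0"
    using that a p r D by simp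
  show ?thesis using eq t1 t2 z by linarith
qed

lemma coreA_gt:
  fixes p r s u a b :: real
  assumes p: "1 < p" "p < 2" and r: "0 < s" "s < r" and u: "u \<le> r * s"
    and a: "0 < b" "b \<le> a" and bern: "s * a \<le> b * ((p - 1) * s + (2 - p) * r)"
  shows "a * (s\<^sup>2 - u) \<ge> b * (u - r\<^sup>2) + b * (s\<^sup>2 - 2 * u + r\<^sup>2) + (p - 2) * b * (r - s)\<^sup>2"
proof -
  have h1: "(a - b) * (s\<^sup>2 - r * s) \<le> (a - b) * (s\<^sup>2 - u)"
    using a u by (intro mult_left_mono) auto
  have h2: "(a - b) * s \<le> (2 - p) * b * (r - s)" using bern by (simp add: algebra_simps)
  have h2': "(r - s) * ((a - b) * s) \<le> (r - s) * ((2 - p) * b * (r - s))"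
    using h2 r by (intro mult_left_mono) auto
  have eq: "a * (s\<^sup>2 - u) - (b * (u - r\<^sup>2) + b * (s\<^sup>2 - 2 * u + r\<^sup>2) + (p - 2) * b * (r - s)\<^sup>2)
     = (a - b) * (s\<^sup>2 - u) + (r - s) * ((2 - p) * b * (r - s))"
    by (simp add: algebra_simps power2_eq_square)
  have eq2: "(a - b) * (s\<^sup>2 - r * s) = - ((r - s) * ((a - b) * s))"
    by (simp add: algebra_simps power2_eq_square)
  show ?thesis using eq eq2 h1 h2' by linarith
qed

lemma pw1:
  fixes x p :: real
  assumes "0 \<le> x"
  shows "x powr (p - 1) = x * x powr (p - 2)"
proof (cases "x = 0")
  case False
  have "x powr (p - 2 + 1) = x powr (p - 2) * x powr 1" by (rule powr_add)
  moreover have "p - 2 + 1 = p - 1" by simp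
  ultimately show ?thesis using assms by (simp add: mult.commute)
qed simp

lemma scalarA:
  fixes p r s u :: real
  assumes p: "1 < p" "p < 2" and r: "0 < r" "0 \<le> s" and u: "\<bar>u\<bar> \<le> r * s"
  defines "E \<equiv> omega1 p r s * (s\<^sup>2 - 2 * u + r\<^sup>2) + (p - 2) * omega2 p r s * (r - s)\<^sup>2"
  shows "s powr (p - 2) * (s\<^sup>2 - u) \<ge> r powr (p - 2) * (u - r\<^sup>2)
            + omega1 p r s * (s\<^sup>2 - 2 * u + r\<^sup>2) + (p - 2) * omega2 p r s * (r - s)\<^sup>2
         \<and> E \<ge> 0 \<and> (E = 0 \<longrightarrow> s\<^sup>2 - 2 * u + r\<^sup>2 = 0)"
proof (cases "r \<le> s")
  case True
  define a where "a = s powr (p - 2)"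
  define b where "b = r powr (p - 2)"
  define D where "D = (2 - p) * s + (p - 1) * r"
  have s: "0 < s" using r True by simp
  have a: "0 < a" unfolding a_def using s by simp
  have ab: "a \<le> b" unfolding a_def b_def using p r True by (intro powr_mono2') auto
  have be: "r powr (p - 1) \<le> s powr (p - 1 - 1) * ((p - 1) * r + (1 - (p - 1)) * s)"
    using p r s by (intro bern) auto
  have bern': "r * b \<le> a * ((p - 1) * r + (2 - p) * s)"
    using be pw1[of r p] r unfolding a_def b_def by (simp add: algebra_simps)
  have om1: "omega1 p r s = a" using True unfolding omega1_def a_def by simp
  have om2: "omega2 p r s = s * a / D" using True pw1[of s p] s unfolding omega2_def a_def D_def by simp
  have uu: "u \<le> r * s" using u by simp
  show ?thesis
    using coreA_le[OF p r(1) True uu a ab bern'] coreA_le_nonneg[OF p r(1) True uu a]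
    unfolding E_def om1 om2 D_def a_def b_def by simp
next
  case False
  define a where "a = s powr (p - 2)"
  define b where "b = r powr (p - 2)"
  have b: "0 < b" unfolding b_def using r by simp
  have om1: "omega1 p r s = b" using False unfolding omega1_def b_def by simp
  have om2: "omega2 p r s = b" using False unfolding omega2_def b_def by simp
  have Y: "s\<^sup>2 - 2 * u + r\<^sup>2 \<ge> (r - s)\<^sup>2" using u by (simp add: power2_eq_square algebra_simps)
  have rs: "(r - s)\<^sup>2 > 0" using False by simp
  have "b * (s\<^sup>2 - 2 * u + r\<^sup>2) \<ge> b * (r - s)\<^sup>2" using Y b by (intro mult_left_mono) auto
  hence E: "E \<ge> (p - 1) * b * (r - s)\<^sup>2" unfolding E_def om1 om2 by (simp add: algebra_simps)
  have Epos: "E > 0" using E b p rs by (smt (verit) mult_pos_pos)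
  have main: "a * (s\<^sup>2 - u) \<ge> b * (u - r\<^sup>2) + b * (s\<^sup>2 - 2 * u + r\<^sup>2) + (p - 2) * b * (r - s)\<^sup>2"
  proof (cases "s = 0")
    case True
    hence "u = 0" using u by simp
    thus ?thesis using True b p unfolding a_def by (simp add: mult_nonpos_nonneg)
  next
    case s0: False
    hence s: "0 < s" using r by simp
    have ab: "b \<le> a" unfolding a_def b_def using p s False by (intro powr_mono2') auto
    have be: "s powr (p - 1) \<le> r powr (p - 1 - 1) * ((p - 1) * s + (1 - (p - 1)) * r)"
      using p r s by (intro bern) auto
    have bern': "s * a \<le> b * ((p - 1) * s + (2 - p) * r)"
      using be pw1[of s p] s unfolding a_def b_def by (simp add: algebra_simps)
    show ?thesis using coreA_gt[OF p s _ _ b ab bern'] False u by simp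
  qed
  show ?thesis using main Epos unfolding om1 om2 a_def b_def by simp
qed

lemma coreB_le:
  fixes p r s u a b :: real
  assumes p: "2 \<le> p" and r: "0 < r" "r \<le> s" and u: "u \<le> r * s"
    and b: "0 < b" and H: "b * s + (p - 2) * b * (s - r) \<le> a * s"
  shows "a * (s\<^sup>2 - u) \<ge> b * (u - r\<^sup>2) + b * (s\<^sup>2 - 2 * u + r\<^sup>2) + (p - 2) * b * (r - s)\<^sup>2"
proof -
  have "(p - 2) * b * (s - r) \<ge> 0" using p b r by simp
  hence "b * s \<le> a * s" using H by linarith
  hence ab: "b \<le> a" using r by (simp add: mult_le_cancel_right)
  have h1: "(a - b) * (s\<^sup>2 - r * s) \<le> (a - b) * (s\<^sup>2 - u)"
    using ab u by (intro mult_left_mono) auto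
  have h2: "(s - r) * ((p - 2) * b * (s - r)) \<le> (s - r) * ((a - b) * s)"
    using H r by (intro mult_left_mono) (auto simp: algebra_simps)
  have eq: "a * (s\<^sup>2 - u) - (b * (u - r\<^sup>2) + b * (s\<^sup>2 - 2 * u + r\<^sup>2) + (p - 2) * b * (r - s)\<^sup>2)
     = (a - b) * (s\<^sup>2 - u) - (s - r) * ((p - 2) * b * (s - r))"
    by (simp add: algebra_simps power2_eq_square)
  have eq2: "(a - b) * (s\<^sup>2 - r * s) = (s - r) * ((a - b) * s)"
    by (simp add: algebra_simps power2_eq_square)
  show ?thesis using eq eq2 h1 h2 by linarith
qed

lemma coreB_mid:
  fixes p r s u a b v :: real
  assumes p: "2 \<le> p" and r: "0 < s" "s < r" and u: "\<bar>u\<bar> \<le> r * s"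
    and v: "0 \<le> v" and sa: "s * a = v * r" and H: "v * r + (p - 1) * v * (r - s) \<le> r * b"
  shows "a * (s\<^sup>2 - u) \<ge> b * (u - r\<^sup>2) + v * (s\<^sup>2 - 2 * u + r\<^sup>2) + (p - 2) * v * (r - s)\<^sup>2"
proof -
  define A where "A = a * s\<^sup>2 + b * r\<^sup>2 - v * (s\<^sup>2 + r\<^sup>2) - (p - 2) * v * (r - s)\<^sup>2"
  define B where "B = - a - b + 2 * v"
  have id: "a * (s\<^sup>2 - u) - (b * (u - r\<^sup>2) + v * (s\<^sup>2 - 2 * u + r\<^sup>2) + (p - 2) * v * (r - s)\<^sup>2)
     = A + B * u" unfolding A_def B_def by (simp add: algebra_simps power2_eq_square)
  have e1: "A + B * (r * s) - (r - s) * (r * b - v * r - (p - 1) * v * (r - s)) = (s * a - v * r) * (s - r)"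
    unfolding A_def B_def by (simp add: algebra_simps power2_eq_square)
  have e1': "(r - s) * (r * b - v * r - (p - 1) * v * (r - s)) \<ge> 0"
    using H r by (intro mult_nonneg_nonneg) auto
  have e2: "A - B * (r * s) - ((r + s) * (v * r + r * b) - v * (r + s)\<^sup>2 - (p - 2) * v * (r - s)\<^sup>2)
      = (s * a - v * r) * (s + r)"
    unfolding A_def B_def by (simp add: algebra_simps power2_eq_square)
  have f1: "(r + s) * (v * r + (v * r + (p - 1) * v * (r - s))) \<le> (r + s) * (v * r + r * b)"
    using H r by (intro mult_left_mono) (auto simp: algebra_simps)
  have f2: "(r + s) * (v * r + (v * r + (p - 1) * v * (r - s))) - v * (r + s)\<^sup>2 - (p - 2) * v * (r - s)\<^sup>2
      = v * (r - s) * (2 * r + 2 * (p - 1) * s)"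
    by (simp add: algebra_simps power2_eq_square)
  have f3: "v * (r - s) * (2 * r + 2 * (p - 1) * s) \<ge> 0"
    using v r p by (intro mult_nonneg_nonneg) auto
  have z1: "(s * a - v * r) * (s - r) = 0" "(s * a - v * r) * (s + r) = 0" using sa by simp_all
  have "A + B * u \<ge> 0"
  proof (rule lin[OF u])
    show "A + B * (r * s) \<ge> 0" using e1 e1' z1 by linarith
    show "A - B * (r * s) \<ge> 0" using e2 f1 f2 f3 z1 by linarith
  qed
  thus ?thesis using id by linarith
qed

lemma coreB_low:
  fixes p r s u a b v c :: real
  assumes p: "2 \<le> p" and r: "0 \<le> s" "s < r" and u: "\<bar>u\<bar> \<le> r * s"
    and v: "0 \<le> v" and b: "0 < b" and c: "c = 1 / p"
    and sa: "s * a = v * r" and H: "v * r \<le> c * (r * b)"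
  shows "a * (s\<^sup>2 - u) \<ge> b * (u - r\<^sup>2) + c * b * (s\<^sup>2 - 2 * u + r\<^sup>2) + (p - 2) * v * (r - s)\<^sup>2"
proof -
  have pc: "p * c = 1" using c p by simp
  have c0: "0 < c" using c p by simp
  define A where "A = a * s\<^sup>2 + b * r\<^sup>2 - c * b * (s\<^sup>2 + r\<^sup>2) - (p - 2) * v * (r - s)\<^sup>2"
  define B where "B = - a - b + 2 * c * b"
  have id: "a * (s\<^sup>2 - u) - (b * (u - r\<^sup>2) + c * b * (s\<^sup>2 - 2 * u + r\<^sup>2) + (p - 2) * v * (r - s)\<^sup>2)
     = A + B * u" unfolding A_def B_def by (simp add: algebra_simps power2_eq_square)
  have e1: "A + B * (r * s) - (r - s) * (r * b - v * r - c * b * (r - s) - (p - 2) * v * (r - s))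
     = (s * a - v * r) * (s - r)"
    unfolding A_def B_def by (simp add: algebra_simps power2_eq_square)
  have g1: "c * b * (r - s) \<le> c * (r * b)" using c0 b r by (simp add: algebra_simps)
  have g2': "(p - 2) * v * (r - s) \<le> (p - 2) * v * r" using p v r by (intro mult_left_mono) auto
  hence g2: "(p - 2) * v * (r - s) \<le> (p - 2) * (v * r)" by (simp add: mult.assoc)
  have g3: "(p - 2) * (v * r) \<le> (p - 2) * (c * (r * b))" using p H by (intro mult_left_mono) auto
  have g4: "r * b - c * (r * b) - c * (r * b) - (p - 2) * (c * (r * b)) = r * b * (1 - p * c)"
    by (simp add: algebra_simps)
  have g5: "r * b * (1 - p * c) = 0" using pc by simp
  have br: "r * b - v * r - c * b * (r - s) - (p - 2) * v * (r - s) \<ge> 0"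
    using g1 g2 g3 g4 g5 H by linarith
  have e1': "(r - s) * (r * b - v * r - c * b * (r - s) - (p - 2) * v * (r - s)) \<ge> 0"
    using br r by (intro mult_nonneg_nonneg) auto
  have e2: "A - B * (r * s) - ((r + s) * (v * r + r * b) - c * b * (r + s)\<^sup>2 - (p - 2) * v * (r - s)\<^sup>2)
      = (s * a - v * r) * (s + r)"
    unfolding A_def B_def by (simp add: algebra_simps power2_eq_square)
  have k1: "c * b * (r + s)\<^sup>2 \<le> c * b * ((r + s) * (2 * r))"
    using c0 b r by (intro mult_left_mono) (auto simp: power2_eq_square)
  have k2: "v * (r - s)\<^sup>2 \<le> (v * r) * (r + s)"
  proof -
    have q1: "s * s \<le> r * s" "0 \<le> r * s" using r by (auto intro: mult_right_mono)
    have q2: "(r - s)\<^sup>2 = r * r - 2 * (r * s) + s * s" "r * (r + s) = r * r + r * s"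
      by (simp_all add: power2_eq_square algebra_simps)
    have "(r - s)\<^sup>2 \<le> r * (r + s)" using q1 q2 by linarith
    hence "v * (r - s)\<^sup>2 \<le> v * (r * (r + s))" using v by (intro mult_left_mono) auto
    thus ?thesis by (simp add: algebra_simps)
  qed
  have k3: "(p - 2) * (v * (r - s)\<^sup>2) \<le> (p - 2) * ((c * (r * b)) * (r + s))"
  proof -
    have "(v * r) * (r + s) \<le> (c * (r * b)) * (r + s)" using H r by (intro mult_right_mono) auto
    thus ?thesis using k2 p by (intro mult_left_mono) auto
  qed
  have k4: "c * b * ((r + s) * (2 * r)) + (p - 2) * ((c * (r * b)) * (r + s)) = (p * c) * (r * b) * (r + s)"
    by (simp add: algebra_simps)
  have k5: "(r + s) * (r * b) \<le> (r + s) * (v * r + r * b)" using v r by (simp add: mult_left_mono)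
  have z1: "(s * a - v * r) * (s - r) = 0" "(s * a - v * r) * (s + r) = 0" using sa by simp_all
  have k6: "(p * c) * (r * b) * (r + s) = (r + s) * (r * b)" using pc by simp
  have k7: "(p - 2) * v * (r - s)\<^sup>2 = (p - 2) * (v * (r - s)\<^sup>2)" by simp
  have "A + B * u \<ge> 0"
  proof (rule lin[OF u])
    show "A + B * (r * s) \<ge> 0" using e1 e1' z1 by linarith
    show "A - B * (r * s) \<ge> 0" using e2 k1 k3 k4 k5 k6 k7 z1 by linarith
  qed
  thus ?thesis using id by linarith
qed

lemma scalarB:
  fixes p r s u :: real
  assumes p: "2 \<le> p" and r: "0 < r" "0 \<le> s" and u: "\<bar>u\<bar> \<le> r * s"
  shows "s powr (p - 2) * (s\<^sup>2 - u) \<ge> r powr (p - 2) * (u - r\<^sup>2)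
            + omega3 p (1 / p) r s * (s\<^sup>2 - 2 * u + r\<^sup>2)
            + (p - 2) * omega4 p (1 / p) r s * (r - s)\<^sup>2"
proof -
  define a where "a = s powr (p - 2)"
  define b where "b = r powr (p - 2)"
  define c where "c = 1 / p"
  have b: "0 < b" unfolding b_def using r by simp
  have c0: "0 < c" unfolding c_def using p by simp
  have uu: "u \<le> r * s" using u by simp
  show ?thesis
  proof (cases "r \<le> s")
    case True
    have s: "0 < s" using r True by simp
    have l: "r powr (p - 2) * (1 + (p - 2) * (s - r) / s) \<le> s powr (p - 2)"
      using r True p by (intro L1) auto
    have "b * s + (p - 2) * b * (s - r) = (b * (1 + (p - 2) * (s - r) / s)) * s"
      using s by (simp add: field_simps)
    also have "\<dots> \<le> a * s" using l s unfolding a_def b_def by (intro mult_right_mono) auto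
    finally have H: "b * s + (p - 2) * b * (s - r) \<le> a * s" .
    have o3: "omega3 p (1 / p) r s = b" "omega4 p (1 / p) r s = b"
      using True unfolding omega3_def omega4_def b_def by simp_all
    show ?thesis using coreB_le[OF p r(1) True uu b H] unfolding o3 a_def b_def by simp
  next
    case False
    define v where "v = s powr (p - 1) / r"
    have v: "0 \<le> v" unfolding v_def using r by simp
    have sa: "s * a = v * r" unfolding v_def a_def using r pw1[of s p] by simp
    have rb: "r * b = r powr (p - 1)" unfolding b_def using pw1[of r p] r by simp
    have o4: "omega4 p (1 / p) r s = v" using False unfolding omega4_def v_def by simp
    show ?thesis
    proof (cases "c powr (1 / (p - 1)) * r \<le> s")
      case True
      have s: "0 < s" using True c0 r by (smt (verit) mult_pos_pos powr_gt_zero)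
      have o3: "omega3 p (1 / p) r s = v" using False True unfolding omega3_def v_def c_def by simp
      have l: "s powr (p - 1) * (1 + (p - 1) * (r - s) / r) \<le> r powr (p - 1)"
        using s False p by (intro L1) auto
      have "v * r + (p - 1) * v * (r - s) = s powr (p - 1) * (1 + (p - 1) * (r - s) / r)"
        unfolding v_def using r by (simp add: field_simps)
      hence H: "v * r + (p - 1) * v * (r - s) \<le> r * b" using l rb by simp
      show ?thesis using coreB_mid[OF p s _ u v sa H] False unfolding o3 o4 a_def b_def by simp
    next
      case low: False
      have o3: "omega3 p (1 / p) r s = c * b" using False low unfolding omega3_def b_def c_def by simp
      have "s powr (p - 1) \<le> (c powr (1 / (p - 1)) * r) powr (p - 1)"
        using low r p by (intro powr_mono2) auto
      also have "\<dots> = c * r powr (p - 1)"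
        using c0 r p by (simp add: powr_mult powr_powr)
      finally have H: "v * r \<le> c * (r * b)" unfolding v_def rb using r by simp
      show ?thesis using coreB_low[OF p r(2) _ u v b c_def sa H] False unfolding o3 o4 a_def b_def c_def
        by simp
    qed
  qed
qed

lemma partA:
  fixes p :: real and x y :: "'a::euclidean_space"
  assumes p: "1 < p" "p < 2" and x: "x \<noteq> 0"
  shows "norm (x + y) powr (p - 2) * ((x + y) \<bullet> y)
                \<ge> norm x powr (p - 2) * (x \<bullet> y)
                   + omega1 p (norm x) (norm (x + y)) * (norm y)\<^sup>2
                   + (p - 2) * omega2 p (norm x) (norm (x + y)) * (norm x - norm (x + y))\<^sup>2
            \<and> omega1 p (norm x) (norm (x + y)) * (norm y)\<^sup>2
                + (p - 2) * omega2 p (norm x) (norm (x + y)) * (norm x - norm (x + y))\<^sup>2 \<ge> 0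
            \<and> (omega1 p (norm x) (norm (x + y)) * (norm y)\<^sup>2
                + (p - 2) * omega2 p (norm x) (norm (x + y)) * (norm x - norm (x + y))\<^sup>2 = 0
                \<longrightarrow> y = 0)"
proof -
  define z where "z = x + y"
  have yz: "y = z - x" unfolding z_def by simp
  define u where "u = x \<bullet> z"
  have e1: "z \<bullet> y = (norm z)\<^sup>2 - u" unfolding yz u_def
    by (simp add: inner_diff_right power2_norm_eq_inner inner_commute)
  have e2: "x \<bullet> y = u - (norm x)\<^sup>2" unfolding yz u_def
    by (simp add: inner_diff_right power2_norm_eq_inner)
  have e3: "(norm y)\<^sup>2 = (norm z)\<^sup>2 - 2 * u + (norm x)\<^sup>2" unfolding yz u_def
    by (simp add: inner_diff_right inner_diff_left power2_norm_eq_inner inner_commute)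
  have uu: "\<bar>u\<bar> \<le> norm x * norm z" unfolding u_def by (rule Cauchy_Schwarz_ineq2)
  have r: "0 < norm x" using x by simp
  note S = scalarA[OF p r norm_ge_zero uu]
  have y0: "(norm z)\<^sup>2 - 2 * u + (norm x)\<^sup>2 = 0 \<Longrightarrow> y = 0" using e3 by simp
  show ?thesis using S y0 unfolding z_def[symmetric] e1 e2 e3 by auto
qed

lemma dotn_nonneg: "0 \<le> dotn n x x"
  unfolding dotn_def by (intro sum_nonneg) auto

lemma normn_sq: "(normn n x)\<^sup>2 = dotn n x x"
  unfolding normn_def using dotn_nonneg by simp

lemma dotn_cs: "\<bar>dotn n x z\<bar> \<le> normn n x * normn n z"
proof -
  have "\<bar>dotn n x z\<bar> \<le> (\<Sum>i<n. \<bar>x i\<bar> * \<bar>z i\<bar>)"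
    unfolding dotn_def by (metis (no_types, lifting) abs_mult sum.cong sum_abs)
  also have "\<dots> \<le> L2_set x {..<n} * L2_set z {..<n}" by (rule L2_set_mult_ineq)
  also have "\<dots> = normn n x * normn n z"
    unfolding L2_set_def normn_def dotn_def by (simp add: power2_eq_square)
  finally show ?thesis .
qed

lemma partB:
  fixes p :: real and x y :: "nat \<Rightarrow> real"
  assumes p: "2 \<le> p" and x: "\<exists>i<n. x i \<noteq> 0"
  shows "let z = (\<lambda>i. x i + y i) in
              normn n z powr (p - 2) * dotn n z y
                \<ge> normn n x powr (p - 2) * dotn n x y
                   + omega3 p (1 / p) (normn n x) (normn n z) * (normn n y)\<^sup>2
                   + (p - 2) * omega4 p (1 / p) (normn n x) (normn n z) * (normn n x - normn n z)\<^sup>2"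
proof -
  define z where "z = (\<lambda>i. x i + y i)"
  define u where "u = dotn n x z"
  have aux: "(\<Sum>i<n. x i * (y i * 2)) = 2 * (\<Sum>i<n. x i * y i)"
  proof -
    have "(\<Sum>i<n. x i * (y i * 2)) = (\<Sum>i<n. 2 * (x i * y i))" by (rule sum.cong) auto
    thus ?thesis by (simp add: sum_distrib_left)
  qed
  have e1: "dotn n z y = (normn n z)\<^sup>2 - u" unfolding normn_sq u_def z_def dotn_def
    by (simp add: algebra_simps sum.distrib sum_subtractf) (simp add: aux)?
  have e2: "dotn n x y = u - (normn n x)\<^sup>2" unfolding normn_sq u_def z_def dotn_def
    by (simp add: algebra_simps sum.distrib sum_subtractf)
  have e3: "(normn n y)\<^sup>2 = (normn n z)\<^sup>2 - 2 * u + (normn n x)\<^sup>2" unfolding normn_sq u_def z_def dotn_def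
    by (simp add: algebra_simps sum.distrib sum_subtractf) (simp add: aux)
  obtain i where i: "i < n" "x i \<noteq> 0" using x by blast
  have "0 < (x i)\<^sup>2" using i by simp
  hence "0 < x i * x i" by (simp add: power2_eq_square)
  also have "\<dots> \<le> dotn n x x" unfolding dotn_def by (rule member_le_sum) (use i in auto)
  finally have "0 < normn n x" unfolding normn_def by simp
  note S = scalarB[OF p this _ dotn_cs[of n x z]]
  have nz: "0 \<le> normn n z" unfolding normn_def using dotn_nonneg by simp
  show ?thesis using S[OF nz] unfolding Let_def z_def[symmetric] e1 e2 e3 u_def
    by (simp add: power2_commute)
qed

theorem mainTheorem4:
  shows "(\<forall>p::real. 1 < p \<and> p < 2 \<longrightarrow>
           (\<forall>(x::'a::euclidean_space) y. x \<noteq> 0 \<longrightarrow>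
              norm (x + y) powr (p - 2) * ((x + y) \<bullet> y)
                \<ge> norm x powr (p - 2) * (x \<bullet> y)
                   + omega1 p (norm x) (norm (x + y)) * (norm y)\<^sup>2
                   + (p - 2) * omega2 p (norm x) (norm (x + y)) * (norm x - norm (x + y))\<^sup>2
            \<and> omega1 p (norm x) (norm (x + y)) * (norm y)\<^sup>2
                + (p - 2) * omega2 p (norm x) (norm (x + y)) * (norm x - norm (x + y))\<^sup>2 \<ge> 0
            \<and> (omega1 p (norm x) (norm (x + y)) * (norm y)\<^sup>2
                + (p - 2) * omega2 p (norm x) (norm (x + y)) * (norm x - norm (x + y))\<^sup>2 = 0
                \<longrightarrow> y = 0)))
   \<and> (\<forall>p::real. 2 \<le> p \<longrightarrow>
        (\<exists>c3. 0 < c3 \<and> c3 \<le> 1/2 \<and>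
          (\<forall>n::nat. \<forall>x y :: nat \<Rightarrow> real. (\<exists>i<n. x i \<noteq> 0) \<longrightarrow>
             (let z = (\<lambda>i. x i + y i) in
              normn n z powr (p - 2) * dotn n z y
                \<ge> normn n x powr (p - 2) * dotn n x y
                   + omega3 p c3 (normn n x) (normn n z) * (normn n y)\<^sup>2
                   + (p - 2) * omega4 p c3 (normn n x) (normn n z) * (normn n x - normn n z)\<^sup>2))))"
proof (rule conjI)
  show "\<forall>p::real. 1 < p \<and> p < 2 \<longrightarrow>
           (\<forall>(x::'a::euclidean_space) y. x \<noteq> 0 \<longrightarrow>
              norm (x + y) powr (p - 2) * ((x + y) \<bullet> y)
                \<ge> norm x powr (p - 2) * (x \<bullet> y)
                   + omega1 p (norm x) (norm (x + y)) * (norm y)\<^sup>2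
                   + (p - 2) * omega2 p (norm x) (norm (x + y)) * (norm x - norm (x + y))\<^sup>2
            \<and> omega1 p (norm x) (norm (x + y)) * (norm y)\<^sup>2
                + (p - 2) * omega2 p (norm x) (norm (x + y)) * (norm x - norm (x + y))\<^sup>2 \<ge> 0
            \<and> (omega1 p (norm x) (norm (x + y)) * (norm y)\<^sup>2
                + (p - 2) * omega2 p (norm x) (norm (x + y)) * (norm x - norm (x + y))\<^sup>2 = 0
                \<longrightarrow> y = 0))"
    using partA by blast
next
  show "\<forall>p::real. 2 \<le> p \<longrightarrow>
        (\<exists>c3. 0 < c3 \<and> c3 \<le> 1/2 \<and>
          (\<forall>n::nat. \<forall>x y :: nat \<Rightarrow> real. (\<exists>i<n. x i \<noteq> 0) \<longrightarrow>
             (let z = (\<lambda>i. x i + y i) in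
              normn n z powr (p - 2) * dotn n z y
                \<ge> normn n x powr (p - 2) * dotn n x y
                   + omega3 p c3 (normn n x) (normn n z) * (normn n y)\<^sup>2
                   + (p - 2) * omega4 p c3 (normn n x) (normn n z) * (normn n x - normn n z)\<^sup>2)))"
  proof (intro allI impI)
    fix p :: real
    assume p: "2 \<le> p"
    have "0 < 1 / p" "1 / p \<le> 1 / 2" using p by (auto simp: field_simps)
    thus "\<exists>c3. 0 < c3 \<and> c3 \<le> 1/2 \<and>
          (\<forall>n::nat. \<forall>x y :: nat \<Rightarrow> real. (\<exists>i<n. x i \<noteq> 0) \<longrightarrow>
             (let z = (\<lambda>i. x i + y i) in
              normn n z powr (p - 2) * dotn n z y
                \<ge> normn n x powr (p - 2) * dotn n x y
                   + omega3 p c3 (normn n x) (normn n z) * (normn n y)\<^sup>2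
                   + (p - 2) * omega4 p c3 (normn n x) (normn n z) * (normn n x - normn n z)\<^sup>2))"
      using partB[OF p] by blast
  qed
qed

end
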